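(* If $\beta=\alpha$, then for $k,\ell\ge 1$: \begin{eqnarray*} |u(3k-1)-u(3k-2)| & = & |u(3k-2)-u(3k-3)|,\\ |v(3k)-v(3k-1)| & = & |v(3k-1)-v(3k-2)|,\\ |w(3k+1)-w(3k)| & = & |w(3k)-w(3k-1)|,\\ |u((3\ell-1)\omega)-u((3\ell-2)\omega)| & = & |u((3\ell-2)\omega)-u((3\ell-3)\omega)|,\\ |v(3\ell\omega)-v((3\ell-1)\omega)| & = & |v((3\ell-1)\omega)-v((3\ell-2)\omega)|,\\ |w((3\ell+1)\omega)-w(3\ell\omega)| & = & |w(3\ell\omega)-w((3\ell-1)\omega)|. \end{eqnarray*}
   Context: Here $\omega=e^{2\pi i/3}$, and $u,v,w$ are the fields on the sector $\{k+\ell\omega: k,\ell\ge0\}$ of the regular triangular lattice obtained from the $fgh$--system with the constraints \[ \alpha u=k\frac{f_0g_0f_3}{f_0g_0+g_0f_3+f_3g_3}+\ell\frac{f_2g_2f_5}{f_2g_2+g_2f_5+f_5g_5}+m\frac{f_4g_4f_1}{f_4g_4+g_4f_1+f_1g_1},\quad \beta v=k\frac{g_0f_3g_3}{f_0g_0+g_0f_3+f_3g_3}+\ell\frac{g_2f_5g_5}{f_2g_2+g_2f_5+f_5g_5}+m\frac{g_4f_1g_1}{f_4g_4+g_4f_1+f_1g_1} \] at every vertex $\mathfrak{z}=k+\ell\omega+m\omega^2$ (with $f_j,g_j$ the increments of $u,v$ along $(\mathfrak{z},\mathfrak{z}+1)$, $(\mathfrak{z}-\omega^2,\mathfrak{z})$,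 $(\mathfrak{z},\mathfrak{z}+\omega)$, $(\mathfrak{z}-1,\mathfrak{z})$, $(\mathfrak{z},\mathfrak{z}+\omega^2)$, $(\mathfrak{z}-\omega,\mathfrak{z})$ for $j=0,\dots,5$), $u(0)=v(0)=w(0)=0$, and initial conditions $u(1)=v(1)=1$, $u(\omega)=v(\omega)=e^{i\theta}$, $0<\theta<\pi$; $w$ is defined by $w(\mathfrak{z}_2)-w(\mathfrak{z}_1)=1/((u(\mathfrak{z}_2)-u(\mathfrak{z}_1))(v(\mathfrak{z}_2)-v(\mathfrak{z}_1)))$ on positively oriented edges ($\mathfrak{z}_2-\mathfrak{z}_1\in\{1,\omega,\omega^2\}$). On the positive $k$-axis the constraint reduces to $\alpha u(k)=k\frac{f(k)g(k)f(k-1)}{f(k)g(k)+g(k)f(k-1)+f(k-1)g(k-1)}$, $\beta v(k)=k\frac{g(k)f(k-1)g(k-1)}{f(k)g(k)+g(k)f(k-1)+f(k-1)g(k-1)}$ with $f(k)=u(k+1)-u(k)$, $g(k)=v(k+1)-v(k)$, and analogously on the $\ell$-axis. *)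

theory Defs
  imports "HOL-Analysis.Analysis"
begin

text \<open>Lattice points of the regular triangular lattice are encoded as pairs
  (k, l) of integers, standing for k + l*omega with omega = exp(2 pi i/3).
  Then 1 = (1,0), omega = (0,1) and omega^2 = -1-omega = (-1,-1).
  The sector is the set of (k,l) with k, l >= 0 (i.e. m = 0).\<close>

definition sector :: "(int \<times> int) set" where
  "sector = {(k, l). 0 \<le> k \<and> 0 \<le> l}"

definition pos_edge :: "int \<times> int \<Rightarrow> int \<times> int \<Rightarrow> bool" where
  "pos_edge z1 z2 \<longleftrightarrow>
     (fst z2 - fst z1, snd z2 - snd z1) \<in> {(1, 0), (0, 1), (-1, -1)}"

definition den_k :: "(int \<times> int \<Rightarrow> complex) \<Rightarrow> (int \<times> int \<Rightarrow> complex) \<Rightarrow> int \<Rightarrow> int \<Rightarrow> complex" where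
  "den_k u v k l =
     (let f0 = u (k + 1, l) - u (k, l); g0 = v (k + 1, l) - v (k, l);
          f3 = u (k, l) - u (k - 1, l); g3 = v (k, l) - v (k - 1, l)
      in f0 * g0 + g0 * f3 + f3 * g3)"

definition den_l :: "(int \<times> int \<Rightarrow> complex) \<Rightarrow> (int \<times> int \<Rightarrow> complex) \<Rightarrow> int \<Rightarrow> int \<Rightarrow> complex" where
  "den_l u v k l =
     (let f2 = u (k, l + 1) - u (k, l); g2 = v (k, l + 1) - v (k, l);
          f5 = u (k, l) - u (k, l - 1); g5 = v (k, l) - v (k, l - 1)
      in f2 * g2 + g2 * f5 + f5 * g5)"

text \<open>The constraint of the fgh-system at the vertex k + l*omega + m*omega^2
  of the sector, where m = 0 (so the m-term vanishes).\<close>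
definition fgh_constraint ::
  "real \<Rightarrow> real \<Rightarrow> (int \<times> int \<Rightarrow> complex) \<Rightarrow> (int \<times> int \<Rightarrow> complex) \<Rightarrow> int \<Rightarrow> int \<Rightarrow> bool" where
  "fgh_constraint \<alpha> \<beta> u v k l \<longleftrightarrow>
     (let f0 = u (k + 1, l) - u (k, l); g0 = v (k + 1, l) - v (k, l);
          f3 = u (k, l) - u (k - 1, l); g3 = v (k, l) - v (k - 1, l);
          f2 = u (k, l + 1) - u (k, l); g2 = v (k, l + 1) - v (k, l);
          f5 = u (k, l) - u (k, l - 1); g5 = v (k, l) - v (k, l - 1)
      in complex_of_real \<alpha> * u (k, l) =
           of_int k * (f0 * g0 * f3 / (f0 * g0 + g0 * f3 + f3 * g3))
         + of_int l * (f2 * g2 * f5 / (f2 * g2 + g2 * f5 + f5 * g5))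
       \<and> complex_of_real \<beta> * v (k, l) =
           of_int k * (g0 * f3 * g3 / (f0 * g0 + g0 * f3 + f3 * g3))
         + of_int l * (g2 * f5 * g5 / (f2 * g2 + g2 * f5 + f5 * g5)))"

end

theory Submission
  imports Defs
begin

lemma sum3_solve: "x + y + z = (r::complex) \<Longrightarrow> z = r - x - y" by auto

lemma axis_lemma:
  fixes a :: complex and U V :: "nat \<Rightarrow> complex"
  assumes U0: "U 0 = 0" and V0: "V 0 = 0"
    and Fnz: "\<And>k. U (Suc k) - U k \<noteq> 0" and Gnz: "\<And>k. V (Suc k) - V k \<noteq> 0"
    and Dnz: "\<And>k. k \<ge> 1 \<Longrightarrow> (U (k+1) - U k) * (V (k+1) - V k) + (V (k+1) - V k) * (U k - U (k-1))
                 + (U k - U (k-1)) * (V k - V (k-1)) \<noteq> 0"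
    and eqU: "\<And>k. k \<ge> 1 \<Longrightarrow> a * U k = of_nat k * ((U (k+1) - U k) * (V (k+1) - V k) * (U k - U (k-1)) /
                 ((U (k+1) - U k) * (V (k+1) - V k) + (V (k+1) - V k) * (U k - U (k-1))
                 + (U k - U (k-1)) * (V k - V (k-1))))"
    and eqV: "\<And>k. k \<ge> 1 \<Longrightarrow> a * V k = of_nat k * ((V (k+1) - V k) * (U k - U (k-1)) * (V k - V (k-1)) /
                 ((U (k+1) - U k) * (V (k+1) - V k) + (V (k+1) - V k) * (U k - U (k-1))
                 + (U k - U (k-1)) * (V k - V (k-1))))"
  shows "U (3*n+2) - U (3*n+1) = U (3*n+1) - U (3*n)
       \<and> V (3*n+3) - V (3*n+2) = V (3*n+2) - V (3*n+1)
       \<and> U (3*n+4) - U (3*n+3) = U (3*n+3) - U (3*n+2)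
       \<and> V (3*n+4) - V (3*n+3) = V (3*n+3) - V (3*n+2)"
proof -
  define F where "F k = U (Suc k) - U k" for k
  define G where "G k = V (Suc k) - V k" for k
  have F: "F k \<noteq> 0" for k using Fnz F_def by auto
  have G: "G k \<noteq> 0" for k using Gnz G_def by auto
  define X where "X k = U k / F (k-1)" for k
  define Y where "Y k = U k / F k" for k
  define Z where "Z k = V k / G k" for k
  define W where "W k = V k / G (k-1)" for k
  have key: "a \<noteq> 0 \<and> U k \<noteq> 0 \<and> V k \<noteq> 0 \<and> Y k = W k \<and> X k + Y k + Z k = of_nat k / a"
    if k: "k \<ge> 1" for k
  proof -
    obtain j where j: "k = Suc j" using k by (cases k) auto
    define D where "D = F k * G k + G k * F j + F j * G j"
    have D: "D \<noteq> 0" using Dnz[OF k] unfolding D_def F_def G_def j by simp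
    have e1: "a * U k * D = of_nat k * F k * G k * F j"
      using eqU[OF k] D unfolding D_def F_def G_def j by (simp add: field_simps)
    have e2: "a * V k * D = of_nat k * G k * F j * G j"
      using eqV[OF k] D unfolding D_def F_def G_def j by (simp add: field_simps)
    have kn: "(of_nat k :: complex) \<noteq> 0" using k by simp
    have a: "a \<noteq> 0" using e1 kn F G D by auto
    have u: "U k \<noteq> 0" using e1 kn F G D by auto
    have v: "V k \<noteq> 0" using e2 kn F G D by auto
    have "a * D * (U k * G j) = a * D * (V k * F k)"
      using e1 e2 by (simp add: algebra_simps)
    hence A: "U k * G j = V k * F k" using a D by simp
    have YW: "Y k = W k" unfolding Y_def W_def using A F G j
      by (simp add: field_simps)
    have "(X k + Y k + Z k) * (a * F k * G k * F j) = a * U k * D"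
      unfolding X_def Y_def Z_def D_def using F G A j
      by (simp add: field_simps)
    also have "\<dots> = of_nat k * F k * G k * F j" by (rule e1)
    finally have "((X k + Y k + Z k) * a) * (F k * G k * F j) = of_nat k * (F k * G k * F j)"
      by (simp add: algebra_simps)
    hence "(X k + Y k + Z k) * a = of_nat k" using F G by simp
    hence "X k + Y k + Z k = of_nat k / a" using a
      by (simp add: field_simps)
    thus ?thesis using a u v YW by simp
  qed
  have recX: "X (Suc k) = Y k + 1" for k
    unfolding X_def Y_def using F[of k] by (simp add: F_def field_simps)
  have recW: "W (Suc k) = Z k + 1" for k
    unfolding W_def Z_def using G[of k] by (simp add: G_def field_simps)
  have step: "(X (3*m+1) = Y (3*m+1) \<and> W (3*m+2) = Z (3*m+2) \<and> X (3*m+3) = Y (3*m+3) \<and> W (3*m+3) = Z (3*m+3))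
     \<and> (Y (3*Suc m) = of_nat (Suc m) / a \<and> Z (3*Suc m) = of_nat (Suc m) / a)"
    if IH0: "Y (3*m) = of_nat m / a \<and> Z (3*m) = of_nat m / a" for m
  proof -
    have a: "a \<noteq> 0" using key[of 1] by simp
    have k1: "X (3*m+1) + Y (3*m+1) + Z (3*m+1) = of_nat (3*m+1) / a" "Y (3*m+1) = W (3*m+1)"
      using key[of "3*m+1"] by auto
    have k2: "X (3*m+2) + Y (3*m+2) + Z (3*m+2) = of_nat (3*m+2) / a" "Y (3*m+2) = W (3*m+2)"
      using key[of "3*m+2"] by auto
    have k3: "X (3*m+3) + Y (3*m+3) + Z (3*m+3) = of_nat (3*m+3) / a" "Y (3*m+3) = W (3*m+3)"
      using key[of "3*m+3"] by auto
    have r1: "X (3*m+1) = Y (3*m) + 1" "W (3*m+1) = Z (3*m) + 1" using recX recW by auto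
    have r2: "X (3*m+2) = Y (3*m+1) + 1" "W (3*m+2) = Z (3*m+1) + 1" using recX recW by auto
    have r3: "X (3*m+3) = Y (3*m+2) + 1" "W (3*m+3) = Z (3*m+2) + 1"
      using recX[of "3*m+2"] recW[of "3*m+2"] by (simp_all add: numeral_eq_Suc)
    define c where "c = 1 / a"
    have dc: "of_nat k / a = of_nat k * c" for k unfolding c_def by simp
    have IH: "Y (3*m) = of_nat m * c" "Z (3*m) = of_nat m * c" using IH0 dc by auto
    have k1': "X (3*m+1) + Y (3*m+1) + Z (3*m+1) = (3 * of_nat m + 1) * c"
      using k1(1) dc[of "3*m+1"] by simp
    have k2': "X (3*m+2) + Y (3*m+2) + Z (3*m+2) = (3 * of_nat m + 2) * c"
      using k2(1) dc[of "3*m+2"] by simp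
    have k3': "X (3*m+3) + Y (3*m+3) + Z (3*m+3) = (3 * of_nat m + 3) * c"
      using k3(1) dc[of "3*m+3"] by simp
    have x1: "X (3*m+1) = of_nat m * c + 1" using r1 IH by simp
    have y1: "Y (3*m+1) = of_nat m * c + 1" using r1 IH k1 by simp
    have z1: "Z (3*m+1) = (of_nat m + 1) * c - 2" unfolding sum3_solve[OF k1'] x1 y1
      by (simp add: algebra_simps)
    have x2: "X (3*m+2) = of_nat m * c + 2" using r2 y1 by simp
    have y2: "Y (3*m+2) = (of_nat m + 1) * c - 1" using r2 z1 k2 by simp
    have z2: "Z (3*m+2) = (of_nat m + 1) * c - 1" unfolding sum3_solve[OF k2'] x2 y2
      by (simp add: algebra_simps)
    have x3: "X (3*m+3) = (of_nat m + 1) * c" using r3 y2 by simp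
    have y3: "Y (3*m+3) = (of_nat m + 1) * c" using r3 z2 k3 by simp
    have z3: "Z (3*m+3) = (of_nat m + 1) * c" unfolding sum3_solve[OF k3'] x3 y3
      by (simp add: algebra_simps)
    have "Y (3*m+3) = of_nat (Suc m) / a \<and> Z (3*m+3) = of_nat (Suc m) / a"
      using y3 z3 dc[of "Suc m"] by simp
    moreover have "X (3*m+1) = Y (3*m+1) \<and> W (3*m+2) = Z (3*m+2) \<and> X (3*m+3) = Y (3*m+3) \<and> W (3*m+3) = Z (3*m+3)"
      using x1 y1 y2 z2 x3 y3 z3 k2(2) k3(2) by simp
    ultimately show ?thesis by (simp add: numeral_eq_Suc)
  qed
  have ind: "Y (3*m) = of_nat m / a \<and> Z (3*m) = of_nat m / a" for m
  proof (induction m)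
    case 0 then show ?case by (simp add: Y_def Z_def U0 V0)
  next
    case (Suc m) then show ?case using step by blast
  qed
  have S: "X (3*n+1) = Y (3*n+1) \<and> W (3*n+2) = Z (3*n+2) \<and> X (3*n+3) = Y (3*n+3) \<and> W (3*n+3) = Z (3*n+3)"
    using step[OF ind] by blast
  have cU: "F (k - 1) = F k" if "k \<ge> 1" "X k = Y k" for k
  proof -
    have "U k \<noteq> 0" using key[OF that(1)] by simp
    moreover have "U k / F (k-1) = U k / F k" using that(2) unfolding X_def Y_def .
    ultimately show ?thesis by simp
  qed
  have cV: "G (k - 1) = G k" if "k \<ge> 1" "W k = Z k" for k
  proof -
    have "V k \<noteq> 0" using key[OF that(1)] by simp
    moreover have "V k / G (k-1) = V k / G k" using that(2) unfolding W_def Z_def .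
    ultimately show ?thesis by simp
  qed
  have 1: "F (3*n+1) = F (3*n)" using cU[of "3*n+1"] S by simp
  have 2: "G (3*n+2) = G (3*n+1)" using cV[of "3*n+2"] S by simp
  have 3: "F (3*n+3) = F (3*n+2)" using cU[of "3*n+3"] S by simp
  have 4: "G (3*n+3) = G (3*n+2)" using cV[of "3*n+3"] S by simp
  show ?thesis using 1 2 3 4 unfolding F_def G_def by (simp add: numeral_eq_Suc add_ac)
qed
theorem lemma21:
  fixes \<alpha> \<beta> \<theta> :: real and u v w :: "int \<times> int \<Rightarrow> complex"
  assumes beta_eq: "\<beta> = \<alpha>"
    and theta: "0 < \<theta>" "\<theta> < pi"
    and origin: "u (0, 0) = 0" "v (0, 0) = 0" "w (0, 0) = 0"
    and init1: "u (1, 0) = 1" "v (1, 0) = 1"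
    and init\<omega>: "u (0, 1) = cis \<theta>" "v (0, 1) = cis \<theta>"
    and constraint: "\<And>k l. 0 \<le> k \<Longrightarrow> 0 \<le> l \<Longrightarrow> fgh_constraint \<alpha> \<beta> u v k l"
    and den_k_nz: "\<And>k l. 0 < k \<Longrightarrow> 0 \<le> l \<Longrightarrow> den_k u v k l \<noteq> 0"
    and den_l_nz: "\<And>k l. 0 \<le> k \<Longrightarrow> 0 < l \<Longrightarrow> den_l u v k l \<noteq> 0"
    and edges_nz: "\<And>z1 z2. z1 \<in> sector \<Longrightarrow> z2 \<in> sector \<Longrightarrow> pos_edge z1 z2 \<Longrightarrow>
                     u z2 \<noteq> u z1 \<and> v z2 \<noteq> v z1"
    and w_def: "\<And>z1 z2. z1 \<in> sector \<Longrightarrow> z2 \<in> sector \<Longrightarrow> pos_edge z1 z2 \<Longrightarrow>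
                  w z2 - w z1 = 1 / ((u z2 - u z1) * (v z2 - v z1))"
  shows "(\<forall>k::int. k \<ge> 1 \<longrightarrow>
           cmod (u (3*k - 1, 0) - u (3*k - 2, 0)) = cmod (u (3*k - 2, 0) - u (3*k - 3, 0))
         \<and> cmod (v (3*k, 0) - v (3*k - 1, 0)) = cmod (v (3*k - 1, 0) - v (3*k - 2, 0))
         \<and> cmod (w (3*k + 1, 0) - w (3*k, 0)) = cmod (w (3*k, 0) - w (3*k - 1, 0)))
       \<and> (\<forall>l::int. l \<ge> 1 \<longrightarrow>
           cmod (u (0, 3*l - 1) - u (0, 3*l - 2)) = cmod (u (0, 3*l - 2) - u (0, 3*l - 3))
         \<and> cmod (v (0, 3*l) - v (0, 3*l - 1)) = cmod (v (0, 3*l - 1) - v (0, 3*l - 2))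
         \<and> cmod (w (0, 3*l + 1) - w (0, 3*l)) = cmod (w (0, 3*l) - w (0, 3*l - 1)))"
proof -
  have a_def: "complex_of_real \<beta> = complex_of_real \<alpha>" using beta_eq by simp
  have secK: "(int n, 0) \<in> sector" for n by (simp add: sector_def)
  have secL: "(0, int n) \<in> sector" for n by (simp add: sector_def)
  have peK: "pos_edge (int n, 0) (int (Suc n), 0)" for n by (simp add: pos_edge_def)
  have peL: "pos_edge (0, int n) (0, int (Suc n))" for n by (simp add: pos_edge_def)
  define UK where "UK n = u (int n, 0)" for n
  define VK where "VK n = v (int n, 0)" for n
  define UL where "UL n = u (0, int n)" for n
  define VL where "VL n = v (0, int n)" for n
  have AK: "UK (3*n+2) - UK (3*n+1) = UK (3*n+1) - UK (3*n)
       \<and> VK (3*n+3) - VK (3*n+2) = VK (3*n+2) - VK (3*n+1)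
       \<and> UK (3*n+4) - UK (3*n+3) = UK (3*n+3) - UK (3*n+2)
       \<and> VK (3*n+4) - VK (3*n+3) = VK (3*n+3) - VK (3*n+2)" for n
  proof (rule axis_lemma[where a="complex_of_real \<alpha>"])
    show "UK 0 = 0" "VK 0 = 0" using origin by (simp_all add: UK_def VK_def)
    show "UK (Suc k) - UK k \<noteq> 0" for k using edges_nz[OF secK[of k] secK[of "Suc k"] peK[of k]] by (simp add: UK_def)
    show "VK (Suc k) - VK k \<noteq> 0" for k using edges_nz[OF secK[of k] secK[of "Suc k"] peK[of k]] by (simp add: VK_def)
  next
    fix k :: nat assume k: "k \<ge> 1"
    have i1: "int (k+1) = int k + 1" and i2: "int (k-1) = int k - 1" using k by auto
    have p: "0 < int k" using k by simp
    show "(UK (k+1) - UK k) * (VK (k+1) - VK k) + (VK (k+1) - VK k) * (UK k - UK (k-1))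
                 + (UK k - UK (k-1)) * (VK k - VK (k-1)) \<noteq> 0"
      using den_k_nz[OF p, of 0] unfolding UK_def VK_def i1 i2 den_k_def Let_def by simp
    have C: "fgh_constraint \<alpha> \<beta> u v (int k) 0" using constraint[of "int k" 0] by simp
    show "complex_of_real \<alpha> * UK k = of_nat k * ((UK (k+1) - UK k) * (VK (k+1) - VK k) * (UK k - UK (k-1)) /
                 ((UK (k+1) - UK k) * (VK (k+1) - VK k) + (VK (k+1) - VK k) * (UK k - UK (k-1))
                 + (UK k - UK (k-1)) * (VK k - VK (k-1))))"
      using C unfolding UK_def VK_def i1 i2 fgh_constraint_def Let_def by simp
    show "complex_of_real \<alpha> * VK k = of_nat k * ((VK (k+1) - VK k) * (UK k - UK (k-1)) * (VK k - VK (k-1)) /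
                 ((UK (k+1) - UK k) * (VK (k+1) - VK k) + (VK (k+1) - VK k) * (UK k - UK (k-1))
                 + (UK k - UK (k-1)) * (VK k - VK (k-1))))"
      using C a_def unfolding UK_def VK_def i1 i2 fgh_constraint_def Let_def by simp
  qed
  have AL: "UL (3*n+2) - UL (3*n+1) = UL (3*n+1) - UL (3*n)
       \<and> VL (3*n+3) - VL (3*n+2) = VL (3*n+2) - VL (3*n+1)
       \<and> UL (3*n+4) - UL (3*n+3) = UL (3*n+3) - UL (3*n+2)
       \<and> VL (3*n+4) - VL (3*n+3) = VL (3*n+3) - VL (3*n+2)" for n
  proof (rule axis_lemma[where a="complex_of_real \<alpha>"])
    show "UL 0 = 0" "VL 0 = 0" using origin by (simp_all add: UL_def VL_def)
    show "UL (Suc k) - UL k \<noteq> 0" for k using edges_nz[OF secL[of k] secL[of "Suc k"] peL[of k]] by (simp add: UL_def)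
    show "VL (Suc k) - VL k \<noteq> 0" for k using edges_nz[OF secL[of k] secL[of "Suc k"] peL[of k]] by (simp add: VL_def)
  next
    fix k :: nat assume k: "k \<ge> 1"
    have i1: "int (k+1) = int k + 1" and i2: "int (k-1) = int k - 1" using k by auto
    have p: "0 < int k" using k by simp
    show "(UL (k+1) - UL k) * (VL (k+1) - VL k) + (VL (k+1) - VL k) * (UL k - UL (k-1))
                 + (UL k - UL (k-1)) * (VL k - VL (k-1)) \<noteq> 0"
      using den_l_nz[OF _ p, of 0] unfolding UL_def VL_def i1 i2 den_l_def Let_def by simp
    have C: "fgh_constraint \<alpha> \<beta> u v 0 (int k)" using constraint[of 0 "int k"] by simp
    show "complex_of_real \<alpha> * UL k = of_nat k * ((UL (k+1) - UL k) * (VL (k+1) - VL k) * (UL k - UL (k-1)) /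
                 ((UL (k+1) - UL k) * (VL (k+1) - VL k) + (VL (k+1) - VL k) * (UL k - UL (k-1))
                 + (UL k - UL (k-1)) * (VL k - VL (k-1))))"
      using C unfolding UL_def VL_def i1 i2 fgh_constraint_def Let_def by simp
    show "complex_of_real \<alpha> * VL k = of_nat k * ((VL (k+1) - VL k) * (UL k - UL (k-1)) * (VL k - VL (k-1)) /
                 ((UL (k+1) - UL k) * (VL (k+1) - VL k) + (VL (k+1) - VL k) * (UL k - UL (k-1))
                 + (UL k - UL (k-1)) * (VL k - VL (k-1))))"
      using C a_def unfolding UL_def VL_def i1 i2 fgh_constraint_def Let_def by simp
  qed
  have wK: "w (int (Suc n), 0) - w (int n, 0) = 1 / ((UK (Suc n) - UK n) * (VK (Suc n) - VK n))" for n
    using w_def[OF secK[of n] secK[of "Suc n"] peK[of n]] by (simp add: UK_def VK_def)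
  have wL: "w (0, int (Suc n)) - w (0, int n) = 1 / ((UL (Suc n) - UL n) * (VL (Suc n) - VL n))" for n
    using w_def[OF secL[of n] secL[of "Suc n"] peL[of n]] by (simp add: UL_def VL_def)
  show ?thesis
  proof (intro conjI allI impI)
    fix k :: int assume k: "k \<ge> 1"
    obtain n where n: "k = int n + 1" using k by (metis add.commute le_add_diff_inverse zle_int
      nonneg_int_cases diff_ge_0_iff_ge)
    have e: "3*k - 3 = int (3*n)" "3*k - 2 = int (3*n+1)" "3*k - 1 = int (3*n+2)" "3*k = int (3*n+3)"
      "3*k+1 = int (3*n+4)" using n by auto
    have s: "3*n+1 = Suc (3*n)" "3*n+2 = Suc (3*n+1)" "3*n+3 = Suc (3*n+2)" "3*n+4 = Suc (3*n+3)" by auto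
    show "cmod (u (3*k - 1, 0) - u (3*k - 2, 0)) = cmod (u (3*k - 2, 0) - u (3*k - 3, 0))"
      using AK[of n] unfolding e UK_def by simp
    show "cmod (v (3*k, 0) - v (3*k - 1, 0)) = cmod (v (3*k - 1, 0) - v (3*k - 2, 0))"
      using AK[of n] unfolding e VK_def by simp
    show "cmod (w (3*k + 1, 0) - w (3*k, 0)) = cmod (w (3*k, 0) - w (3*k - 1, 0))"
    proof -
      have w1: "w (int (3*n+4), 0) - w (int (3*n+3), 0) = 1 / ((UK (3*n+4) - UK (3*n+3)) * (VK (3*n+4) - VK (3*n+3)))"
        using wK[of "3*n+3"] unfolding s(4)[symmetric] e by simp
      have w2: "w (int (3*n+3), 0) - w (int (3*n+2), 0) = 1 / ((UK (3*n+3) - UK (3*n+2)) * (VK (3*n+3) - VK (3*n+2)))"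
        using wK[of "3*n+2"] unfolding s(3)[symmetric] e by simp
      have q1: "UK (3*n+4) - UK (3*n+3) = UK (3*n+3) - UK (3*n+2)"
        and q2: "VK (3*n+4) - VK (3*n+3) = VK (3*n+3) - VK (3*n+2)" using AK[of n] by blast+
      have "3*k+1 = int (3*n+4)" "3*k = int (3*n+3)" "3*k-1 = int (3*n+2)" using e by auto
      then have r1: "w (3*k + 1, 0) - w (3*k, 0) = w (int (3*n+4), 0) - w (int (3*n+3), 0)"
        and r2: "w (3*k, 0) - w (3*k - 1, 0) = w (int (3*n+3), 0) - w (int (3*n+2), 0)" by metis+
      show ?thesis unfolding r1 r2 w1 w2 q1 q2 ..
    qed
    show "cmod (u (0, 3*k - 1) - u (0, 3*k - 2)) = cmod (u (0, 3*k - 2) - u (0, 3*k - 3))"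
      using AL[of n] unfolding e UL_def by simp
    show "cmod (v (0, 3*k) - v (0, 3*k - 1)) = cmod (v (0, 3*k - 1) - v (0, 3*k - 2))"
      using AL[of n] unfolding e VL_def by simp
    show "cmod (w (0, 3*k + 1) - w (0, 3*k)) = cmod (w (0, 3*k) - w (0, 3*k - 1))"
    proof -
      have w1: "w (0, int (3*n+4)) - w (0, int (3*n+3)) = 1 / ((UL (3*n+4) - UL (3*n+3)) * (VL (3*n+4) - VL (3*n+3)))"
        using wL[of "3*n+3"] unfolding s(4)[symmetric] e by simp
      have w2: "w (0, int (3*n+3)) - w (0, int (3*n+2)) = 1 / ((UL (3*n+3) - UL (3*n+2)) * (VL (3*n+3) - VL (3*n+2)))"
        using wL[of "3*n+2"] unfolding s(3)[symmetric] e by simp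
      have q1: "UL (3*n+4) - UL (3*n+3) = UL (3*n+3) - UL (3*n+2)"
        and q2: "VL (3*n+4) - VL (3*n+3) = VL (3*n+3) - VL (3*n+2)" using AL[of n] by blast+
      have "3*k+1 = int (3*n+4)" "3*k = int (3*n+3)" "3*k-1 = int (3*n+2)" using e by auto
      then have r1: "w (0, 3*k + 1) - w (0, 3*k) = w (0, int (3*n+4)) - w (0, int (3*n+3))"
        and r2: "w (0, 3*k) - w (0, 3*k - 1) = w (0, int (3*n+3)) - w (0, int (3*n+2))" by metis+
      show ?thesis unfolding r1 r2 w1 w2 q1 q2 ..
    qed
  qed
qed

end
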